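(* Let $p>1$ and $0\le a<p-1$. For every nonnegative nonincreasing sequence $x=(x_n)_{n\ge1}$ with $\sum_{n=1}^\infty x_n^p n^a<\infty$, $$\|x\|_{\ell^p(n^a)}\;\le\;\frac{1}{\zeta(p-a)^{1/p}}\,\|Cx\|_{\ell^p(n^a)},$$ where $\zeta$ is the Riemann zeta function. Moreover, the constant $\zeta(p-a)^{-1/p}$ is optimal (it is attained, e.g., for the sequence $x=(1,0,0,\dots)$).
   Context: For $p>1$ and $a\in\mathbb R$, $\|x\|_{\ell^p(n^a)}=\bigl(\sum_{n=1}^\infty |x_n|^p n^a\bigr)^{1/p}$. The discrete Hardy (Cesàro) operator is $(Cx)_n=\frac1n\sum_{k=1}^n|x_k|$. *)

theory Defs
  imports "HOL-Analysis.Analysis"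
begin

text \<open>Sequences x = (x_n) for n \<ge> 1 are represented as functions nat \<Rightarrow> real;
  the value at index 0 is ignored by every definition below.\<close>

definition rzeta :: "real \<Rightarrow> real" where
  "rzeta s = (\<Sum>n. 1 / (real (Suc n)) powr s)"

definition wnorm :: "real \<Rightarrow> real \<Rightarrow> (nat \<Rightarrow> real) \<Rightarrow> ereal" where
  "wnorm p a x =
     (if summable (\<lambda>n. \<bar>x (Suc n)\<bar> powr p * real (Suc n) powr a)
      then ereal ((\<Sum>n. \<bar>x (Suc n)\<bar> powr p * real (Suc n) powr a) powr (1 / p))
      else \<infinity>)"

definition cesaro :: "(nat \<Rightarrow> real) \<Rightarrow> nat \<Rightarrow> real" where
  "cesaro x n = (1 / real n) * (\<Sum>k=1..n. \<bar>x k\<bar>)"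

definition admissible :: "real \<Rightarrow> real \<Rightarrow> (nat \<Rightarrow> real) \<Rightarrow> bool" where
  "admissible p a x \<longleftrightarrow>
     (\<forall>n\<ge>1. 0 \<le> x n) \<and> (\<forall>n\<ge>1. x (Suc n) \<le> x n) \<and>
     summable (\<lambda>n. x (Suc n) powr p * real (Suc n) powr a)"

end

theory Submission
  imports Defs
begin

lemma incr_diff_powr:
  fixes A B c p :: real
  assumes "1 \<le> p" "0 < B" "B \<le> A" "0 \<le> c"
  shows "(B+c) powr p - B powr p \<le> (A+c) powr p - A powr p"
proof -
  have "(\<lambda>t. (t+c) powr p - t powr p) B \<le> (\<lambda>t. (t+c) powr p - t powr p) A"
  proof (rule DERIV_nonneg_imp_nondecreasing[OF assms(3)])
    fix t assume t: "B \<le> t" "t \<le> A"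
    have tp: "0 < t" using t assms by linarith
    have d1: "((\<lambda>t. t powr p) has_real_derivative p * t powr (p - 1)) (at t)"
      using has_real_derivative_powr[OF tp] by simp
    have d2: "((\<lambda>t. (t+c) powr p) has_real_derivative p * (t+c) powr (p - 1)) (at t)"
      using tp assms by (auto intro!: derivative_eq_intros)
    have "t powr (p-1) \<le> (t+c) powr (p-1)"
      using powr_mono2[of "p-1" t "t+c"] tp assms by simp
    hence "0 \<le> p * (t+c) powr (p - 1) - p * t powr (p - 1)"
      using assms by (simp add: algebra_simps mult_left_mono)
    thus "\<exists>y. ((\<lambda>t. (t+c) powr p - t powr p) has_real_derivative y) (at t) \<and> 0 \<le> y"
      using DERIV_diff[OF d2 d1] by blast
  qed
  thus ?thesis by simp
qed

lemma S_powr_bound: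
  fixes x :: "nat \<Rightarrow> real" and p :: real
  assumes p: "1 \<le> p" and nn: "\<And>n. 1 \<le> n \<Longrightarrow> 0 \<le> x n"
    and dec: "\<And>n. 1 \<le> n \<Longrightarrow> x (Suc n) \<le> x n"
  shows "(\<Sum>k=1..n. (real k powr p - real (k-1) powr p) * x k powr p) \<le> (\<Sum>k=1..n. x k) powr p"
proof (induction n)
  case 0
  then show ?case by simp
next
  case (Suc n)
  have S0: "0 \<le> (\<Sum>k=1..n. x k)" using nn by (intro sum_nonneg) auto
  have xs: "0 \<le> x (Suc n)" using nn by simp
  have dec2: "x (Suc n) \<le> x k" if "1 \<le> k" "k \<le> Suc n" for k
  proof -
    have "\<forall>j. j \<le> Suc n - k \<longrightarrow> x (Suc n) \<le> x (Suc n - j)"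
    proof (intro allI impI)
      fix j assume "j \<le> Suc n - k"
      then show "x (Suc n) \<le> x (Suc n - j)"
      proof (induction j)
        case 0 then show ?case by simp
      next
        case (Suc j)
        have "x (Suc (Suc n - Suc j)) \<le> x (Suc n - Suc j)"
          using dec[of "Suc n - Suc j"] Suc.prems that by simp
        moreover have "Suc (Suc n - Suc j) = Suc n - j" using Suc.prems that by simp
        ultimately show ?case using Suc by simp
      qed
    qed
    from this[rule_format, of "Suc n - k"] that show ?thesis by simp
  qed
  have Sge: "real n * x (Suc n) \<le> (\<Sum>k=1..n. x k)"
  proof -
    have "(\<Sum>k=1..n. x (Suc n)) \<le> (\<Sum>k=1..n. x k)"
      by (intro sum_mono dec2) auto
    thus ?thesis by simp
  qed
  have key: "(real (Suc n) powr p - real n powr p) * x (Suc n) powr p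
      \<le> ((\<Sum>k=1..n. x k) + x (Suc n)) powr p - (\<Sum>k=1..n. x k) powr p"
  proof (cases "n = 0 \<or> x (Suc n) = 0")
    case True
    then show ?thesis
    proof
      assume "n = 0" thus ?thesis by simp
    next
      assume h: "x (Suc n) = 0"
      thus ?thesis using p by simp
    qed
  next
    case False
    hence pos: "0 < real n * x (Suc n)" using xs by auto
    have "(real n * x (Suc n) + x (Suc n)) powr p - (real n * x (Suc n)) powr p
        \<le> ((\<Sum>k=1..n. x k) + x (Suc n)) powr p - (\<Sum>k=1..n. x k) powr p"
      by (rule incr_diff_powr[OF p pos Sge xs])
    moreover have "(real n * x (Suc n) + x (Suc n)) powr p = real (Suc n) powr p * x (Suc n) powr p"
    proof -
      have "real n * x (Suc n) + x (Suc n) = real (Suc n) * x (Suc n)" by (simp add: algebra_simps)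
      thus ?thesis using xs by (simp only: powr_mult of_nat_0_le_iff)
    qed
    moreover have "(real n * x (Suc n)) powr p = real n powr p * x (Suc n) powr p"
      using xs by (simp add: powr_mult)
    ultimately show ?thesis by (simp add: algebra_simps)
  qed
  show ?case using Suc.IH key by simp
qed


lemma chain_dec:
  fixes y :: "nat \<Rightarrow> real"
  assumes "\<forall>k. 1 \<le> k \<and> k < K \<longrightarrow> y (Suc k) \<le> y k" "1 \<le> i" "i \<le> j" "j \<le> K"
  shows "y j \<le> y i"
  using assms(3,4)
proof (induction j)
  case 0 then show ?case using assms(2) by simp
next
  case (Suc j)
  show ?case
  proof (cases "i = Suc j")
    case True then show ?thesis by simp
  next
    case False
    hence "i \<le> j" using Suc.prems by simp
    hence "y j \<le> y i" using Suc by simp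
    moreover have "y (Suc j) \<le> y j" using assms(1) Suc.prems \<open>i \<le> j\<close> assms(2) by simp
    ultimately show ?thesis by simp
  qed
qed

lemma abel_nonneg:
  fixes e y :: "nat \<Rightarrow> real"
  assumes "\<forall>N\<le>K. 0 \<le> (\<Sum>k=1..N. e k)"
    "\<forall>k. 1 \<le> k \<and> k < K \<longrightarrow> y (Suc k) \<le> y k"
    "\<forall>k. 1 \<le> k \<and> k \<le> K \<longrightarrow> 0 \<le> y k"
  shows "0 \<le> (\<Sum>k=1..K. e k * y k)"
  using assms
proof (induction K arbitrary: y)
  case 0 then show ?case by simp
next
  case (Suc K)
  define y' where "y' = (\<lambda>k. y k - y (Suc K))"
  have h1: "\<forall>N\<le>K. 0 \<le> (\<Sum>k=1..N. e k)" using Suc.prems(1) by simp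
  have h2: "\<forall>k. 1 \<le> k \<and> k < K \<longrightarrow> y' (Suc k) \<le> y' k" using Suc.prems(2) by (simp add: y'_def)
  have h3: "\<forall>k. 1 \<le> k \<and> k \<le> K \<longrightarrow> 0 \<le> y' k"
    using chain_dec[OF Suc.prems(2)] by (simp add: y'_def)
  have IH: "0 \<le> (\<Sum>k=1..K. e k * y' k)" using Suc.IH[OF h1 h2 h3] .
  have eq: "(\<Sum>k=1..Suc K. e k * y k) = (\<Sum>k=1..Suc K. e k * y' k) + y (Suc K) * (\<Sum>k=1..Suc K. e k)"
    by (simp add: y'_def algebra_simps sum_distrib_left sum_subtractf)
  have "(\<Sum>k=1..Suc K. e k * y' k) = (\<Sum>k=1..K. e k * y' k)" by (simp add: y'_def)
  moreover have "0 \<le> y (Suc K) * (\<Sum>k=1..Suc K. e k)"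
  proof -
    have "0 \<le> (\<Sum>k=1..Suc K. e k)" using Suc.prems(1) by blast
    moreover have "0 \<le> y (Suc K)" using Suc.prems(3) by simp
    ultimately show ?thesis by simp
  qed
  ultimately show ?case using eq IH by linarith
qed

lemma ident_L3:
  fixes a p :: real
  assumes "N \<le> M"
  shows "(\<Sum>k=1..N. (real k powr p - real (k-1) powr p) * (\<Sum>n=k..M. real n powr (a-p)))
       = (\<Sum>n=1..N. real n powr a) + real N powr p * (\<Sum>n=Suc N..M. real n powr (a-p))"
  using assms
proof (induction N)
  case 0
  then show ?case by simp
next
  case (Suc N)
  have split: "(\<Sum>n=Suc N..M. real n powr (a-p)) = real (Suc N) powr (a-p) + (\<Sum>n=Suc (Suc N)..M. real n powr (a-p))"
    using Suc.prems by (simp add: sum.atLeast_Suc_atMost)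
  have pw: "real (Suc N) powr p * real (Suc N) powr (a-p) = real (Suc N) powr a"
    by (simp flip: powr_add)
  have IH: "(\<Sum>k=1..N. (real k powr p - real (k-1) powr p) * (\<Sum>n=k..M. real n powr (a-p)))
       = (\<Sum>n=1..N. real n powr a) + real N powr p * (\<Sum>n=Suc N..M. real n powr (a-p))"
    using Suc by simp
  show ?case
    using IH split pw by (simp add: algebra_simps)
qed

lemma block_L4:
  fixes a p :: real
  assumes "a \<le> p"
  shows "(\<Sum>m=2..L. real N * real (m*N) powr (a-p)) \<le> (\<Sum>n=Suc N..L*N. real n powr (a-p))"
proof (induction L)
  case 0 then show ?case by simp
next
  case (Suc L)
  show ?case
  proof (cases "L = 0")
    case True then show ?thesis by simp
  next
    case False
    have r: "(\<Sum>m=2..Suc L. real N * real (m*N) powr (a-p)) = (\<Sum>m=2..L. real N * real (m*N) powr (a-p)) + real N * real (Suc L*N) powr (a-p)"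
      using False by (simp add: algebra_simps)
    have l: "(\<Sum>n=Suc N..Suc L*N. real n powr (a-p)) = (\<Sum>n=Suc N..L*N. real n powr (a-p)) + (\<Sum>n=L*N+1..L*N+N. real n powr (a-p))"
    proof -
      have e1: "Suc L * N = L*N + N" by simp
      have "N \<le> L*N" using False by simp
      hence e2: "N < Suc (L*N)" by linarith
      show ?thesis unfolding e1
        using False sum.ub_add_nat[of "Suc N" "L*N" "\<lambda>n. real n powr (a-p)" N]
        using e2 by (simp add: Suc_le_eq)
    qed
    have "(\<Sum>n=L*N+1..L*N+N. real (Suc L*N) powr (a-p)) \<le> (\<Sum>n=L*N+1..L*N+N. real n powr (a-p))"
    proof (rule sum_mono)
      fix n assume "n \<in> {L*N+1..L*N+N}"
      hence n1: "0 < n" "n \<le> Suc L * N" by auto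
      hence "0 < real n" "real n \<le> real (Suc L * N)" by (simp, simp only: of_nat_le_iff)
      thus "real (Suc L*N) powr (a-p) \<le> real n powr (a-p)"
        using powr_mono2'[of "a-p" "real n" "real (Suc L*N)"] assms by simp
    qed
    hence "real N * real (Suc L*N) powr (a-p) \<le> (\<Sum>n=L*N+1..L*N+N. real n powr (a-p))" by simp
    then show ?thesis using r l Suc.IH by simp
  qed
qed

lemma partial_L5:
  fixes a p :: real
  assumes a0: "0 \<le> a" and ap: "a \<le> p" and L1: "1 \<le> L" and NK: "N \<le> K"
  shows "0 \<le> (\<Sum>k=1..N. (real k powr p - real (k-1) powr p) * (\<Sum>n=k..L*K. real n powr (a-p))
              - (\<Sum>m=1..L. real m powr (a-p)) * real k powr a)"
proof -
  define w where "w = (\<lambda>n::nat. real n powr (a-p))"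
  define Z' where "Z' = (\<Sum>m=2..L. w m)"
  define A where "A = (\<Sum>k=1..N. real k powr a)"
  define T where "T = (\<Sum>n=Suc N..L*K. w n)"
  have Z: "(\<Sum>m=1..L. real m powr (a-p)) = 1 + Z'"
    using L1 by (simp add: Z'_def w_def sum.atLeast_Suc_atMost numeral_2_eq_2)
  have NLK: "N \<le> L*K" using L1 NK
    by (metis dual_order.trans mult_1 mult_le_mono1)
  have id: "(\<Sum>k=1..N. (real k powr p - real (k-1) powr p) * (\<Sum>n=k..L*K. real n powr (a-p)))
       = A + real N powr p * T"
    using ident_L3[OF NLK, of p a] by (simp add: A_def T_def w_def)
  have wnn: "\<And>n. 0 \<le> w n" by (simp add: w_def)
  have T1: "(\<Sum>n=Suc N..L*N. w n) \<le> T"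
    unfolding T_def
    by (rule sum_mono2) (use NK wnn in auto)
  have T2: "(\<Sum>m=2..L. real N * real (m*N) powr (a-p)) \<le> (\<Sum>n=Suc N..L*N. w n)"
    using block_L4[OF ap, where L=L and N=N] by (simp add: w_def)
  have T3: "(\<Sum>m=2..L. real N * real (m*N) powr (a-p)) = real N * real N powr (a-p) * Z'"
    by (simp add: Z'_def w_def sum_distrib_left powr_mult algebra_simps)
  have T4: "real N powr p * (real N * real N powr (a-p)) = real N * real N powr a"
  proof -
    have "real N powr p * real N powr (a-p) = real N powr a" by (simp flip: powr_add)
    thus ?thesis by (simp add: algebra_simps)
  qed
  have NpT: "real N * real N powr a * Z' \<le> real N powr p * T"
  proof -
    have "real N * real N powr a * Z' = (real N powr p * (real N * real N powr (a-p))) * Z'"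
      by (simp only: T4)
    also have "\<dots> = real N powr p * (real N * real N powr (a-p) * Z')"
      by (simp add: mult.assoc)
    also have "\<dots> \<le> real N powr p * T"
      using T1 T2 T3 by (intro mult_left_mono) auto
    finally show ?thesis .
  qed
  have Aub: "A \<le> real N * real N powr a"
  proof -
    have "A \<le> (\<Sum>k=1..N. real N powr a)"
      unfolding A_def by (rule sum_mono) (use a0 in \<open>auto intro: powr_mono2\<close>)
    thus ?thesis by simp
  qed
  have Z'nn: "0 \<le> Z'" unfolding Z'_def using wnn by (simp add: sum_nonneg)
  have "Z' * A \<le> Z' * (real N * real N powr a)" using Aub Z'nn by (rule mult_left_mono)
  hence fin: "0 \<le> A + real N powr p * T - (1 + Z') * A"
    using NpT by (simp add: algebra_simps)
  show ?thesis
    using fin id Z by (simp add: sum_subtractf sum_distrib_left[symmetric] A_def mult.commute)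
qed

lemma finite_main:
  fixes x :: "nat \<Rightarrow> real" and a p :: real
  assumes p: "1 \<le> p" and a0: "0 \<le> a" and ap: "a \<le> p" and L1: "1 \<le> L"
    and nn: "\<And>n. 1 \<le> n \<Longrightarrow> 0 \<le> x n" and dec: "\<And>n. 1 \<le> n \<Longrightarrow> x (Suc n) \<le> x n"
  shows "(\<Sum>m=1..L. real m powr (a-p)) * (\<Sum>k=1..K. real k powr a * x k powr p)
       \<le> (\<Sum>n=1..L*K. real n powr (a-p) * (\<Sum>k=1..n. x k) powr p)"
proof -
  define d where "d = (\<lambda>k::nat. real k powr p - real (k-1) powr p)"
  define y where "y = (\<lambda>k. x k powr p)"
  define w where "w = (\<lambda>n::nat. real n powr (a-p))"
  define M where "M = L*K"
  define \<tau> where "\<tau> = (\<lambda>k. \<Sum>n=k..M. w n)"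
  define Z where "Z = (\<Sum>m=1..L. real m powr (a-p))"
  have dnn: "0 \<le> d k" for k
    unfolding d_def using p by (simp add: powr_mono2)
  have ynn: "0 \<le> y k" for k unfolding y_def by simp
  have wnn: "0 \<le> w n" for n unfolding w_def by simp
  have s1: "(\<Sum>n=1..M. w n * (\<Sum>k=1..n. d k * y k)) \<le> (\<Sum>n=1..M. w n * (\<Sum>k=1..n. x k) powr p)"
    by (intro sum_mono mult_left_mono wnn)
       (use S_powr_bound[where x=x and p=p, OF p nn dec] in \<open>simp add: d_def y_def\<close>)
  have s2: "(\<Sum>n=1..M. w n * (\<Sum>k\<in>{k\<in>{1..K}. k \<le> n}. d k * y k)) \<le> (\<Sum>n=1..M. w n * (\<Sum>k=1..n. d k * y k))"
    by (intro sum_mono mult_left_mono wnn sum_mono2) (auto intro: mult_nonneg_nonneg dnn ynn)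
  have s3: "(\<Sum>n=1..M. w n * (\<Sum>k\<in>{k\<in>{1..K}. k \<le> n}. d k * y k)) = (\<Sum>k=1..K. d k * \<tau> k * y k)"
  proof -
    have "(\<Sum>n=1..M. w n * (\<Sum>k\<in>{k\<in>{1..K}. k \<le> n}. d k * y k))
        = (\<Sum>n\<in>{1..M}. \<Sum>k\<in>{k\<in>{1..K}. k \<le> n}. w n * (d k * y k))"
      by (simp add: sum_distrib_left)
    also have "\<dots> = (\<Sum>k\<in>{1..K}. \<Sum>n\<in>{n\<in>{1..M}. k \<le> n}. w n * (d k * y k))"
      by (rule sum.swap_restrict) auto
    also have "\<dots> = (\<Sum>k\<in>{1..K}. \<Sum>n\<in>{k..M}. w n * (d k * y k))"
    proof (rule sum.cong[OF refl])
      fix k assume "k \<in> {1..K}"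
      hence "{n\<in>{1..M}. k \<le> n} = {k..M}" by auto
      thus "(\<Sum>n\<in>{n\<in>{1..M}. k \<le> n}. w n * (d k * y k)) = (\<Sum>n\<in>{k..M}. w n * (d k * y k))" by simp
    qed
    also have "\<dots> = (\<Sum>k=1..K. d k * \<tau> k * y k)"
    proof (rule sum.cong[OF refl])
      fix k
      show "(\<Sum>n\<in>{k..M}. w n * (d k * y k)) = d k * \<tau> k * y k"
        unfolding \<tau>_def sum_distrib_right sum_distrib_left by (rule sum.cong) auto
    qed
    finally show ?thesis .
  qed
  have s4: "0 \<le> (\<Sum>k=1..K. (d k * \<tau> k - Z * real k powr a) * y k)"
  proof (rule abel_nonneg)
    show "\<forall>N\<le>K. 0 \<le> (\<Sum>k=1..N. d k * \<tau> k - Z * real k powr a)"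
      using partial_L5[OF a0 ap L1] by (simp add: d_def \<tau>_def w_def M_def Z_def)
    show "\<forall>k. 1 \<le> k \<and> k < K \<longrightarrow> y (Suc k) \<le> y k"
      unfolding y_def using nn dec p by (auto intro: powr_mono2)
    show "\<forall>k. 1 \<le> k \<and> k \<le> K \<longrightarrow> 0 \<le> y k" using ynn by auto
  qed
  have "Z * (\<Sum>k=1..K. real k powr a * x k powr p) \<le> (\<Sum>k=1..K. d k * \<tau> k * y k)"
    using s4 by (simp add: algebra_simps sum_subtractf sum_distrib_left y_def)
  thus ?thesis using s1 s2 s3 by (simp add: Z_def M_def w_def)
qed

lemma sum_1_shift: "(\<Sum>k=1..n. f k) = (\<Sum>k<n. f (Suc k))"
  by (induction n) (auto simp: atLeastAtMostSuc_conv add.commute)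

lemma zeta_term: "1 / real (Suc n) powr s = real (Suc n) powr (- s)"
  by (simp add: powr_minus_divide)

lemma zeta_summable:
  assumes "1 < s"
  shows "summable (\<lambda>n. 1 / real (Suc n) powr s)"
proof -
  have "summable (\<lambda>n. real n powr (- s))" using summable_real_powr_iff[of "-s"] assms by simp
  hence "summable (\<lambda>n. real (Suc n) powr (- s))" by (subst summable_Suc_iff)
  thus ?thesis by (simp only: zeta_term)
qed

lemma zeta_pos: "1 < s \<Longrightarrow> 0 < rzeta s"
  unfolding rzeta_def by (rule suminf_pos[OF zeta_summable]) auto

lemma zeta_partial:
  assumes "a < p - 1"
  shows "(\<lambda>L. \<Sum>m=1..L. real m powr (a-p)) \<longlonglongrightarrow> rzeta (p - a)"
proof -
  have "(\<lambda>L. \<Sum>m<L. 1 / real (Suc m) powr (p-a)) \<longlonglongrightarrow> rzeta (p - a)"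
    unfolding rzeta_def by (rule summable_LIMSEQ) (rule zeta_summable, use assms in simp)
  moreover have "(\<Sum>m=1..L. real m powr (a-p)) = (\<Sum>m<L. 1 / real (Suc m) powr (p-a))" for L
    unfolding sum_1_shift zeta_term by simp
  ultimately show ?thesis by simp
qed

lemma cesaro_term:
  fixes x :: "nat \<Rightarrow> real"
  assumes nn: "\<And>n. 1 \<le> n \<Longrightarrow> 0 \<le> x n"
  shows "\<bar>cesaro x (Suc n)\<bar> powr p * real (Suc n) powr a
       = real (Suc n) powr (a-p) * (\<Sum>k=1..Suc n. x k) powr p"
proof -
  define S where "S = (\<Sum>k=1..Suc n. x k)"
  have "(\<Sum>k=1..Suc n. \<bar>x k\<bar>) = S" unfolding S_def by (rule sum.cong) (use nn in auto)
  hence c: "cesaro x (Suc n) = S / real (Suc n)" by (simp add: cesaro_def)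
  have S0: "0 \<le> S" unfolding S_def using nn by (intro sum_nonneg) auto
  have "\<bar>cesaro x (Suc n)\<bar> powr p = S powr p / real (Suc n) powr p"
    using S0 by (simp add: c powr_divide)
  thus ?thesis by (simp add: S_def powr_diff)
qed

lemma main_real:
  fixes x :: "nat \<Rightarrow> real" and a p :: real
  assumes p: "1 < p" and a0: "0 \<le> a" and ap: "a < p - 1" and adm: "admissible p a x"
    and sg: "summable (\<lambda>n. \<bar>cesaro x (Suc n)\<bar> powr p * real (Suc n) powr a)"
  shows "rzeta (p - a) * (\<Sum>n. x (Suc n) powr p * real (Suc n) powr a)
       \<le> (\<Sum>n. \<bar>cesaro x (Suc n)\<bar> powr p * real (Suc n) powr a)"
proof -
  define g where "g = (\<lambda>n. \<bar>cesaro x (Suc n)\<bar> powr p * real (Suc n) powr a)"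
  define f where "f = (\<lambda>n. x (Suc n) powr p * real (Suc n) powr a)"
  have nn: "\<And>n. 1 \<le> n \<Longrightarrow> 0 \<le> x n" and dec: "\<And>n. 1 \<le> n \<Longrightarrow> x (Suc n) \<le> x n"
    and sf: "summable f"
    using adm unfolding admissible_def f_def by auto
  have sg': "summable g" using sg unfolding g_def .
  define Z where "Z = (\<lambda>L. \<Sum>m=1..L. real m powr (a-p))"
  define B where "B = (\<lambda>K. \<Sum>k=1..K. real k powr a * x k powr p)"
  have bound: "Z L * B K \<le> suminf g" if "1 \<le> L" for L K
  proof -
    have "Z L * B K \<le> (\<Sum>n=1..L*K. real n powr (a-p) * (\<Sum>k=1..n. x k) powr p)"
      unfolding Z_def B_def by (rule finite_main) (use p a0 ap that nn dec in auto)
    also have "\<dots> = (\<Sum>n<L*K. real (Suc n) powr (a-p) * (\<Sum>k=1..Suc n. x k) powr p)"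
      by (rule sum_1_shift)
    also have "\<dots> = (\<Sum>n<L*K. g n)"
      unfolding g_def by (rule sum.cong[OF refl]) (rule cesaro_term[where x=x, symmetric, OF nn])
    also have "\<dots> \<le> suminf g"
      by (rule sum_le_suminf[OF sg']) (auto simp: g_def)
    finally show ?thesis .
  qed
  have bK: "rzeta (p - a) * B K \<le> suminf g" for K
  proof (rule LIMSEQ_le_const2)
    show "(\<lambda>L. Z L * B K) \<longlonglongrightarrow> rzeta (p - a) * B K"
      unfolding Z_def by (intro tendsto_mult zeta_partial[OF ap] tendsto_const)
    show "\<exists>N. \<forall>L\<ge>N. Z L * B K \<le> suminf g" using bound by blast
  qed
  have BK: "B K = (\<Sum>k<K. f k)" for K
    unfolding B_def sum_1_shift f_def by (simp add: mult.commute)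
  have "(\<lambda>K. rzeta (p - a) * B K) \<longlonglongrightarrow> rzeta (p - a) * suminf f"
    unfolding BK by (intro tendsto_mult tendsto_const summable_LIMSEQ sf)
  hence "rzeta (p - a) * suminf f \<le> suminf g"
    by (rule LIMSEQ_le_const2) (use bK in blast)
  thus ?thesis unfolding f_def g_def .
qed

lemma e1_terms:
  "(\<lambda>n. \<bar>(if Suc n = 1 then 1 else 0::real)\<bar> powr p * real (Suc n) powr a) = (\<lambda>n. if n = 0 then 1 else 0)"
  "(\<lambda>n. (if Suc n = 1 then 1 else 0::real) powr p * real (Suc n) powr a) = (\<lambda>n. if n = 0 then 1 else 0)"
  by (auto intro!: ext)

lemma e1_cesaro:
  "(\<lambda>n. \<bar>cesaro (\<lambda>n. if n = 1 then 1 else 0::real) (Suc n)\<bar> powr p * real (Suc n) powr a)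
    = (\<lambda>n. 1 / real (Suc n) powr (p - a))"
proof (rule ext)
  fix n
  have s: "(\<Sum>k=1..Suc n. \<bar>(if k = 1 then 1 else 0::real)\<bar>) = 1"
    by (simp add: sum.delta)
  have c: "cesaro (\<lambda>n. if n = 1 then 1 else 0::real) (Suc n) = 1 / real (Suc n)"
    unfolding cesaro_def s by simp
  show "\<bar>cesaro (\<lambda>n. if n = 1 then 1 else 0::real) (Suc n)\<bar> powr p * real (Suc n) powr a
    = 1 / real (Suc n) powr (p - a)"
    unfolding c by (simp add: powr_divide powr_diff)
qed

theorem theorem3p5:
  fixes p a :: real
  assumes "p > 1" and "0 \<le> a" and "a < p - 1"
  shows "(\<forall>x. admissible p a x \<longrightarrow>
            wnorm p a x \<le> ereal (1 / rzeta (p - a) powr (1 / p)) * wnorm p a (cesaro x))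
       \<and> (\<forall>c::real. (\<forall>x. admissible p a x \<longrightarrow> wnorm p a x \<le> ereal c * wnorm p a (cesaro x))
            \<longrightarrow> 1 / rzeta (p - a) powr (1 / p) \<le> c)
       \<and> admissible p a (\<lambda>n. if n = 1 then 1 else 0)
       \<and> wnorm p a (\<lambda>n. if n = 1 then 1 else 0)
           = ereal (1 / rzeta (p - a) powr (1 / p)) * wnorm p a (cesaro (\<lambda>n. if n = 1 then 1 else 0))"
proof -
  define \<zeta> where "\<zeta> = rzeta (p - a)"
  have zp: "0 < \<zeta>" unfolding \<zeta>_def by (rule zeta_pos) (use assms in simp)
  have c0p: "0 < 1 / \<zeta> powr (1/p)" using zp by simp
  define e1 where "e1 = (\<lambda>n::nat. if n = 1 then 1 else 0::real)"
  have w1: "wnorm p a e1 = ereal 1"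
  proof -
    have "(\<lambda>n. if n = 0 then 1 else 0) sums (1::real)" using sums_single[of 0 "\<lambda>_. 1::real"] by simp
    thus ?thesis unfolding wnorm_def e1_def e1_terms by (simp add: sums_iff)
  qed
  have zs: "summable (\<lambda>n. 1 / real (Suc n) powr (p - a))" by (rule zeta_summable) (use assms in simp)
  have wc1: "wnorm p a (cesaro e1) = ereal (\<zeta> powr (1/p))"
    unfolding wnorm_def e1_def e1_cesaro using zs by (simp add: \<zeta>_def rzeta_def)
  have adm1: "admissible p a e1"
    unfolding admissible_def e1_def e1_terms by auto
  have part1: "\<forall>x. admissible p a x \<longrightarrow>
            wnorm p a x \<le> ereal (1 / \<zeta> powr (1 / p)) * wnorm p a (cesaro x)"
  proof (intro allI impI)
    fix x assume adm: "admissible p a x"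
    define f where "f = (\<lambda>n. x (Suc n) powr p * real (Suc n) powr a)"
    have nn: "\<And>n. 1 \<le> n \<Longrightarrow> 0 \<le> x n" and sf: "summable f"
      using adm unfolding admissible_def f_def by auto
    have fabs: "(\<lambda>n. \<bar>x (Suc n)\<bar> powr p * real (Suc n) powr a) = f"
      unfolding f_def using nn by (intro ext) simp
    have wx: "wnorm p a x = ereal (suminf f powr (1/p))"
      unfolding wnorm_def fabs using sf by simp
    show "wnorm p a x \<le> ereal (1 / \<zeta> powr (1 / p)) * wnorm p a (cesaro x)"
    proof (cases "summable (\<lambda>n. \<bar>cesaro x (Suc n)\<bar> powr p * real (Suc n) powr a)")
      case False
      hence "wnorm p a (cesaro x) = \<infinity>" unfolding wnorm_def by simp
      thus ?thesis using c0p by simp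
    next
      case True
      define G where "G = (\<Sum>n. \<bar>cesaro x (Suc n)\<bar> powr p * real (Suc n) powr a)"
      have wc: "wnorm p a (cesaro x) = ereal (G powr (1/p))"
        unfolding wnorm_def G_def using True by simp
      have ineq: "\<zeta> * suminf f \<le> G"
        using main_real[OF assms adm True] unfolding \<zeta>_def G_def f_def .
      have F0: "0 \<le> suminf f" using sf by (rule suminf_nonneg) (simp add: f_def)
      have "suminf f \<le> G / \<zeta>" using ineq zp by (simp add: field_simps mult.commute)
      hence "suminf f powr (1/p) \<le> (G / \<zeta>) powr (1/p)"
        using F0 assms by (intro powr_mono2) auto
      also have "\<dots> = 1 / \<zeta> powr (1/p) * G powr (1/p)"
        using zp F0 ineq by (simp add: powr_divide)
      finally show ?thesis unfolding wx wc by simp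
    qed
  qed
  have part2: "\<forall>c::real. (\<forall>x. admissible p a x \<longrightarrow> wnorm p a x \<le> ereal c * wnorm p a (cesaro x))
            \<longrightarrow> 1 / \<zeta> powr (1 / p) \<le> c"
  proof (intro allI impI)
    fix c assume h: "\<forall>x. admissible p a x \<longrightarrow> wnorm p a x \<le> ereal c * wnorm p a (cesaro x)"
    have "ereal 1 \<le> ereal c * ereal (\<zeta> powr (1/p))" using h adm1 w1 wc1 by metis
    hence "1 \<le> c * \<zeta> powr (1/p)" by simp
    thus "1 / \<zeta> powr (1 / p) \<le> c" using zp by (simp add: field_simps)
  qed
  have part4: "wnorm p a e1 = ereal (1 / \<zeta> powr (1 / p)) * wnorm p a (cesaro e1)"
    unfolding w1 wc1 using zp by simp
  show ?thesis using part1 part2 adm1 part4 unfolding \<zeta>_def e1_def by blast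
qed

end
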